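(* In the $\beta$-model, for a fixed positive integer $r$, $$\|W_{22}-\widetilde W_{22}\|_{\max}\lesssim\frac{b_n^6}{n^3c_n^5},$$ where $W_{22}$ is the bottom-right $(n-r)\times(n-r)$ block of $W=V^{-1}-S$ and $\widetilde W_{22}=V_{22}^{-1}-S_{22}$.
   Context: $\beta$-model with parameter $\boldsymbol\beta\in\mathbb R^n$. $V=(v_{ij})$ with $v_{ij}=e^{\beta_i+\beta_j}/(1+e^{\beta_i+\beta_j})^2$ for $i\ne j$ and $v_{ii}=\sum_{j\ne i}v_{ij}$; $S=\mathrm{diag}(1/v_{11},\dots,1/v_{nn})$; $V_{22}$ is the bottom-right $(n-r)\times(n-r)$ block of $V$ and $S_{22}=\mathrm{diag}(1/v_{r+1,r+1},\dots,1/v_{nn})$. $\|J\|_{\max}=\max_{i,j}|J_{ij}|$. $b_n=\max_{i\neq j}(1+e^{\beta_i+\beta_j})^2/e^{\beta_i+\beta_j}$, $c_n=\min_{i\ne j}(\cdot)$. $x\lesssim y$ means $x\le Cy$ for a constant $C$ independent of $n$. *)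

theory Defs
  imports "Jordan_Normal_Form.Gauss_Jordan_Elimination"
begin

text \<open>Beta-model quantities for a parameter vector beta indexed by 0,...,n-1
  (the paper's indices 1,...,n shifted by one).\<close>

definition bm_v :: "(nat \<Rightarrow> real) \<Rightarrow> nat \<Rightarrow> nat \<Rightarrow> real" where
  "bm_v \<beta> i j = exp (\<beta> i + \<beta> j) / (1 + exp (\<beta> i + \<beta> j))^2"

definition bm_V :: "nat \<Rightarrow> (nat \<Rightarrow> real) \<Rightarrow> real mat" where
  "bm_V n \<beta> = mat n n (\<lambda>(i,j). if i = j then (\<Sum>k\<in>{0..<n} - {i}. bm_v \<beta> i k) else bm_v \<beta> i j)"

definition bm_S :: "nat \<Rightarrow> (nat \<Rightarrow> real) \<Rightarrow> real mat" where
  "bm_S n \<beta> = mat n n (\<lambda>(i,j). if i = j then 1 / (bm_V n \<beta> $$ (i,i)) else 0)"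

definition br_block :: "nat \<Rightarrow> real mat \<Rightarrow> real mat" where
  "br_block r M = mat (dim_row M - r) (dim_col M - r) (\<lambda>(i,j). M $$ (i + r, j + r))"

text \<open>Matrix inverse (V and V22 are invertible in the relevant range).\<close>
definition minv :: "real mat \<Rightarrow> real mat" where
  "minv M = the (mat_inverse M)"

definition max_norm :: "real mat \<Rightarrow> real" where
  "max_norm M = Max {\<bar>M $$ (i,j)\<bar> | i j. i < dim_row M \<and> j < dim_col M}"

definition bm_b :: "nat \<Rightarrow> (nat \<Rightarrow> real) \<Rightarrow> real" where
  "bm_b n \<beta> = Max {(1 + exp (\<beta> i + \<beta> j))^2 / exp (\<beta> i + \<beta> j) | i j. i < n \<and> j < n \<and> i \<noteq> j}"

definition bm_c :: "nat \<Rightarrow> (nat \<Rightarrow> real) \<Rightarrow> real" where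
  "bm_c n \<beta> = Min {(1 + exp (\<beta> i + \<beta> j))^2 / exp (\<beta> i + \<beta> j) | i j. i < n \<and> j < n \<and> i \<noteq> j}"

definition bm_W22 :: "nat \<Rightarrow> nat \<Rightarrow> (nat \<Rightarrow> real) \<Rightarrow> real mat" where
  "bm_W22 r n \<beta> = br_block r (minv (bm_V n \<beta>) - bm_S n \<beta>)"

definition bm_W22_tilde :: "nat \<Rightarrow> nat \<Rightarrow> (nat \<Rightarrow> real) \<Rightarrow> real mat" where
  "bm_W22_tilde r n \<beta> = minv (br_block r (bm_V n \<beta>)) - br_block r (bm_S n \<beta>)"

end

theory Submission
  imports Defs "Jordan_Normal_Form.Determinant"
begin


lemma sq_aux: fixes p X :: real assumes "0 < p" "p * X \<le> 1 / p" shows "X \<le> (1 / p) ^ 2"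
proof -
  have "X * p \<le> 1 / p" using assms(2) by (simp add: mult.commute)
  hence "X \<le> (1 / p) / p" using assms(1) by (simp add: pos_le_divide_eq del: divide_const_simps)
  thus ?thesis by (simp add: power2_eq_square)
qed
lemma sq_aux2: fixes m b X :: real assumes "0 < m" "0 < b" "m / b * X \<le> b / m" shows "X \<le> (b / m) ^ 2"
proof -
  have e: "b / m = 1 / (m / b)" by simp
  have p: "0 < m / b" using assms by simp
  have "m / b * X \<le> 1 / (m / b)" using assms(3) e by metis
  from sq_aux[OF p this] e show ?thesis by metis
qed

lemma cs_sum: fixes a :: "nat \<Rightarrow> real" assumes "finite S"
  shows "(\<Sum>i\<in>S. a i) ^ 2 \<le> real (card S) * (\<Sum>i\<in>S. a i ^ 2)"
proof -
  have "0 \<le> (\<Sum>i\<in>S. \<Sum>j\<in>S. (a i - a j) ^ 2)" by (intro sum_nonneg) auto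
  also have "(\<Sum>i\<in>S. \<Sum>j\<in>S. (a i - a j) ^ 2) = (\<Sum>i\<in>S. \<Sum>j\<in>S. a i ^ 2 + a j ^ 2 - 2 * (a i * a j))"
    by (simp add: power2_eq_square algebra_simps)
  also have "\<dots> = real (card S) * (\<Sum>i\<in>S. a i ^ 2) + real (card S) * (\<Sum>i\<in>S. a i ^ 2) - 2 * (\<Sum>i\<in>S. a i) ^ 2"
    by (simp add: sum_subtractf sum.distrib sum_distrib_left[symmetric] power2_eq_square sum_product)
  finally show ?thesis by simp
qed
lemma sum_restr: fixes g :: "nat \<Rightarrow> real"
  shows "(\<Sum>k<n. (if r \<le> k then g k else 0)) = (\<Sum>k\<in>{r..<n}. g k)"
proof -
  have "{..<n} \<inter> {k. r \<le> k} = {r..<n}" by auto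
  moreover have "(\<Sum>k<n. (if r \<le> k then g k else 0)) = (\<Sum>k\<in>{..<n} \<inter> {k. r \<le> k}. g k)"
    by (simp add: sum.inter_restrict)
  ultimately show ?thesis by simp
qed
lemma sum_split: fixes g :: "nat \<Rightarrow> real" assumes "r \<le> n"
  shows "(\<Sum>k<n. g k) = (\<Sum>k<r. g k) + (\<Sum>k\<in>{r..<n}. g k)"
  using sum.atLeastLessThan_concat[of 0 r n g] assms by (simp add: lessThan_atLeast0)

lemma sum_delta_mult: fixes f :: "nat \<Rightarrow> real" assumes "finite S"
  shows "(\<Sum>m\<in>S. (if i = m then 1 else 0) * f m) = (if i \<in> S then f i else 0)"
proof -
  have "(if i = m then 1 else 0) * f m = (if i = m then f m else 0)" for m by simp
  then show ?thesis using assms by (simp add: sum.delta)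
qed

lemma div_aux: fixes p X Y :: real assumes "p * X \<le> Y" "0 < p" shows "X \<le> Y / p"
  using assms by (simp add: pos_le_divide_eq mult.commute)

lemma num_aux: fixes n b c r :: real assumes n: "3 \<le> n" and c: "0 < c" and cb: "c \<le> b" and r: "0 \<le> r"
  shows "r * (4 * b ^ 2 / ((n - 1) * c ^ 2) * (r * (4 * b ^ 2 / ((n - 1) * c ^ 2)) * (b / (n - 2))))
    \<le> 192 * r ^ 2 * b ^ 6 / (n ^ 3 * c ^ 5)"
proof -
  have b: "0 < b" using c cb by linarith
  have n1: "0 < n - 1" "0 < n - 2" using n by auto
  have eq: "r * (4 * b ^ 2 / ((n - 1) * c ^ 2) * (r * (4 * b ^ 2 / ((n - 1) * c ^ 2)) * (b / (n - 2))))
      = 16 * r ^ 2 * (b ^ 5 / c ^ 4) * (1 / ((n - 1) ^ 2 * (n - 2)))"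
    using n1 c by (simp add: field_simps power2_eq_square power3_eq_cube eval_nat_numeral)
  have p1: "(2 * n / 3) ^ 2 \<le> (n - 1) ^ 2" using n by (intro power_mono) auto
  have p2: "n / 3 \<le> n - 2" using n by auto
  have "(2 * n / 3) ^ 2 * (n / 3) \<le> (n - 1) ^ 2 * (n - 2)"
    using p1 p2 n by (intro mult_mono) auto
  moreover have "(2 * n / 3) ^ 2 * (n / 3) = 4 / 27 * n ^ 3" by (simp add: power2_eq_square power3_eq_cube)
  ultimately have q: "4 / 27 * n ^ 3 \<le> (n - 1) ^ 2 * (n - 2)" by metis
  have npos: "0 < 4 / 27 * n ^ 3" using n by simp
  have h1: "1 / ((n - 1) ^ 2 * (n - 2)) \<le> 1 / (4 / 27 * n ^ 3)"
  proof (rule divide_left_mono[OF q])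
    have "0 < (n - 1) ^ 2 * (n - 2)" using n1 by simp
    then show "0 < (n - 1) ^ 2 * (n - 2) * (4 / 27 * n ^ 3)" using npos by (rule mult_pos_pos)
  qed simp
  have h2: "b ^ 5 / c ^ 4 \<le> b ^ 6 / c ^ 5"
  proof -
    have "1 \<le> b / c" using c cb by simp
    then have "b ^ 5 / c ^ 4 * 1 \<le> b ^ 5 / c ^ 4 * (b / c)" using b c by (intro mult_left_mono) auto
    also have "b ^ 5 / c ^ 4 * (b / c) = b ^ 6 / c ^ 5" by (simp add: eval_nat_numeral)
    finally show ?thesis by simp
  qed
  have "16 * r ^ 2 * (b ^ 5 / c ^ 4) * (1 / ((n - 1) ^ 2 * (n - 2))) \<le> 16 * r ^ 2 * (b ^ 6 / c ^ 5) * (1 / (4 / 27 * n ^ 3))"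
    using h1 h2 b c n1 by (intro mult_mono mult_left_mono) auto
  also have "\<dots> = 108 * r ^ 2 * b ^ 6 / (n ^ 3 * c ^ 5)" by simp
  also have "\<dots> \<le> 192 * r ^ 2 * b ^ 6 / (n ^ 3 * c ^ 5)"
    using b c n by (intro divide_right_mono mult_right_mono) auto
  finally show ?thesis using eq by simp
qed

locale core =
  fixes n r :: nat and w :: "nat \<Rightarrow> nat \<Rightarrow> real" and b c :: real
    and G H :: "nat \<Rightarrow> nat \<Rightarrow> real"
  assumes n3: "3 \<le> n" and rn: "r < n"
    and wsym: "\<And>i j. w i j = w j i" and wdiag: "\<And>i. w i i = 0"
    and wlow: "\<And>i j. i < n \<Longrightarrow> j < n \<Longrightarrow> i \<noteq> j \<Longrightarrow> 1 / b \<le> w i j"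
    and wup: "\<And>i j. i < n \<Longrightarrow> j < n \<Longrightarrow> w i j \<le> 1 / c"
    and cpos: "0 < c" and cb: "c \<le> b"
begin

definition M :: "nat \<Rightarrow> nat \<Rightarrow> real" where
  "M i j = (if i = j then (\<Sum>k<n. w i k) else w i j)"

lemma bpos: "0 < b" using cpos cb by linarith

lemma wnn: "i < n \<Longrightarrow> j < n \<Longrightarrow> 0 \<le> w i j"
  using wlow[of i j] bpos wdiag[of i] by (cases "i = j") (auto intro: order_trans[rotated])

lemma quad_eq:
  "(\<Sum>i<n. \<Sum>j<n. M i j * y i * y j) = (\<Sum>i<n. \<Sum>j<n. w i j * (y i ^ 2 + y i * y j))"
proof -
  have "(\<Sum>j<n. M i j * y i * y j) = (\<Sum>j<n. w i j * (y i ^ 2 + y i * y j))" if "i < n" for i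
  proof -
    have "(\<Sum>j<n. M i j * y i * y j) = M i i * y i * y i + (\<Sum>j\<in>{..<n}-{i}. M i j * y i * y j)"
      using that by (simp add: sum.remove)
    also have "(\<Sum>j\<in>{..<n}-{i}. M i j * y i * y j) = (\<Sum>j\<in>{..<n}-{i}. w i j * y i * y j)"
      by (rule sum.cong) (auto simp: M_def)
    also have "\<dots> = (\<Sum>j<n. w i j * y i * y j)"
      using that by (simp add: sum.remove wdiag)
    also have "M i i * y i * y i = (\<Sum>j<n. w i j * y i ^ 2)"
      by (simp add: M_def sum_distrib_right power2_eq_square mult.assoc)
    finally show ?thesis by (simp add: sum.distrib[symmetric] algebra_simps)
  qed
  note h = this
  show ?thesis by (rule sum.cong[OF refl]) (simp add: h)
qed

lemma quad_ge:
  "(real n - 2) / b * (\<Sum>i<n. y i ^ 2) \<le> (\<Sum>i<n. \<Sum>j<n. M i j * y i * y j)"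
proof -
  let ?Q = "\<Sum>i<n. \<Sum>j<n. M i j * y i * y j"
  let ?A = "\<Sum>i<n. \<Sum>j<n. w i j * y i ^ 2"
  let ?B = "\<Sum>i<n. \<Sum>j<n. w i j * (y i * y j)"
  let ?S2 = "\<Sum>i<n. y i ^ 2"
  have swap: "?A = (\<Sum>i<n. \<Sum>j<n. w i j * y j ^ 2)"
    by (subst sum.swap) (simp add: wsym)
  have t1: "w i j * (y i ^ 2 + y i * y j) = w i j * y i ^ 2 + w i j * (y i * y j)" for i j
    by (simp add: distrib_left)
  have Q: "?Q = ?A + ?B"
    unfolding quad_eq t1 sum.distrib ..
  have t2: "w i j * (y i + y j) ^ 2 = w i j * y i ^ 2 + w i j * y j ^ 2 + 2 * (w i j * (y i * y j))" for i j
    by (simp add: power2_eq_square algebra_simps)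
  have W: "(\<Sum>i<n. \<Sum>j<n. w i j * (y i + y j) ^ 2) = ?A + ?A + 2 * ?B"
    unfolding t2 sum.distrib swap sum_distrib_left ..
  have t3: "w i j * (y i + y j) ^ 2 \<ge> 1 / b * (y i + y j) ^ 2 - (if i = j then 1 / b * (y i + y j) ^ 2 else 0)"
    if "i < n" "j < n" for i j
    using wlow[OF that] wdiag[of i] mult_right_mono[of "1/b" "w i j" "(y i + y j)^2"] by (cases "i = j") auto
  have "(\<Sum>i<n. \<Sum>j<n. w i j * (y i + y j) ^ 2) \<ge>
      (\<Sum>i<n. \<Sum>j<n. 1 / b * (y i + y j) ^ 2 - (if i = j then 1 / b * (y i + y j) ^ 2 else 0))"
    using t3 by (intro sum_mono) auto
  also have "(\<Sum>i<n. \<Sum>j<n. 1 / b * (y i + y j) ^ 2 - (if i = j then 1 / b * (y i + y j) ^ 2 else 0))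
      = 1 / b * (\<Sum>i<n. \<Sum>j<n. (y i + y j) ^ 2) - (\<Sum>i<n. 1 / b * (y i + y i) ^ 2)"
    by (simp add: sum_subtractf sum_distrib_left)
  also have "(\<Sum>i<n. 1 / b * (y i + y i) ^ 2) = 4 / b * ?S2"
    by (simp add: sum_distrib_left power2_eq_square algebra_simps)
  also have "(\<Sum>i<n. \<Sum>j<n. (y i + y j) ^ 2) = 2 * real n * ?S2 + 2 * (\<Sum>i<n. y i) ^ 2"
  proof -
    have e: "(y i + y j) ^ 2 = y i ^ 2 + y j ^ 2 + 2 * (y i * y j)" for i j by (simp add: power2_eq_square algebra_simps)
    have "(\<Sum>i<n. \<Sum>j<n. y i * y j) = (\<Sum>i<n. y i) ^ 2"
      by (simp add: power2_eq_square sum_product)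
    moreover have "(\<Sum>i<n. \<Sum>j<n. (y i + y j) ^ 2) = real n * ?S2 + real n * ?S2 + 2 * (\<Sum>i<n. \<Sum>j<n. y i * y j)"
      unfolding e sum.distrib sum_distrib_left[symmetric] by (simp add: sum_distrib_left)
    ultimately show ?thesis by simp
  qed
  finally have "1 / b * (2 * real n * ?S2 + 2 * (\<Sum>i<n. y i) ^ 2) - 4 / b * ?S2 \<le> 2 * ?Q"
    using Q W by simp
  moreover have "1 / b * (2 * real n * ?S2) \<le> 1 / b * (2 * real n * ?S2 + 2 * (\<Sum>i<n. y i) ^ 2)"
    using bpos by (intro mult_left_mono) auto
  ultimately have "1 / b * (2 * real n * ?S2) - 4 / b * ?S2 \<le> 2 * ?Q"
    by linarith
  moreover have "2 * ((real n - 2) / b * ?S2) = 1 / b * (2 * real n * ?S2) - 4 / b * ?S2"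
    using bpos by (simp add: field_simps)
  ultimately have "2 * ((real n - 2) / b * ?S2) \<le> 2 * ?Q" by linarith
  thus ?thesis by simp
qed

lemma quad_rewrite:
  "(\<Sum>i<n. \<Sum>j<n. M i j * y i * y j) = (\<Sum>i<n. y i * (\<Sum>j<n. M i j * y j))"
  by (simp add: sum_distrib_left algebra_simps)

lemma inj:
  assumes "\<And>i. i < n \<Longrightarrow> y i = 0 \<or> (\<Sum>k<n. M i k * y k) = 0"
  shows "i < n \<Longrightarrow> y i = 0"
proof -
  assume i: "i < n"
  have "(\<Sum>i<n. \<Sum>j<n. M i j * y i * y j) = 0"
    unfolding quad_rewrite using assms by (intro sum.neutral) force
  with quad_ge[of y] have "(real n - 2) / b * (\<Sum>i<n. y i ^ 2) \<le> 0" by simp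
  moreover have "0 < (real n - 2) / b" using n3 bpos by simp
  ultimately have "(\<Sum>i<n. y i ^ 2) \<le> 0" by (metis mult_zero_right mult_le_cancel_left_pos)
  moreover have "y i ^ 2 \<le> (\<Sum>i<n. y i ^ 2)"
    using i by (intro member_le_sum) auto
  ultimately have "y i ^ 2 \<le> 0" by linarith
  then show "y i = 0" by simp
qed

lemma Mii_ge: "i < n \<Longrightarrow> (real n - 1) / b \<le> M i i"
proof -
  assume i: "i < n"
  have "M i i = (\<Sum>k\<in>{..<n}-{i}. w i k)"
    using i by (simp add: M_def sum.remove wdiag)
  also have "\<dots> \<ge> (\<Sum>k\<in>{..<n}-{i}. 1 / b)"
    using i by (intro sum_mono wlow) auto
  also have "(\<Sum>k\<in>{..<n}-{i}. 1 / b) = (real n - 1) / b"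
    using i by (simp add: card_Diff_singleton of_nat_diff)
  finally show ?thesis .
qed

end

locale core2 = core +
  assumes Ginv: "\<And>i j. i < n \<Longrightarrow> j < n \<Longrightarrow> (\<Sum>l<n. M i l * G l j) = (if i = j then 1 else 0)"
    and Ginv': "\<And>i j. i < n \<Longrightarrow> j < n \<Longrightarrow> (\<Sum>l<n. G i l * M l j) = (if i = j then 1 else 0)"
    and Hinv: "\<And>i j. r \<le> i \<Longrightarrow> i < n \<Longrightarrow> r \<le> j \<Longrightarrow> j < n \<Longrightarrow>
        (\<Sum>l\<in>{r..<n}. M i l * H l j) = (if i = j then 1 else 0)"
begin

lemma G_bound: assumes "i < n" "j < n" shows "\<bar>G i j\<bar> \<le> b / (real n - 2)"
proof -
  let ?y = "\<lambda>l. G l j"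
  have "(\<Sum>i<n. \<Sum>k<n. M i k * ?y i * ?y k) = (\<Sum>i<n. G i j * (if i = j then 1 else 0))"
    unfolding quad_rewrite using Ginv assms by (intro sum.cong) auto
  also have "\<dots> = G j j" using assms by (simp add: if_distrib cong: if_cong)
  finally have q: "(real n - 2) / b * (\<Sum>l<n. G l j ^ 2) \<le> G j j" using quad_ge[of ?y] by simp
  have pos: "0 < (real n - 2) / b" using n3 bpos by simp
  have le: "G l j ^ 2 \<le> (\<Sum>l<n. G l j ^ 2)" if "l < n" for l
    using that by (intro member_le_sum) auto
  have q2: "(real n - 2) / b * G l j ^ 2 \<le> G j j" if "l < n" for l
    by (rule order_trans[OF mult_left_mono[OF le[OF that] less_imp_le[OF pos]] q])
  have "(real n - 2) / b * G j j ^ 2 \<le> G j j" using q2 assms by simp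
  hence Gjj: "G j j \<le> b / (real n - 2)"
  proof (cases "G j j \<le> 0")
    case True
    have "0 < b / (real n - 2)" using bpos n3 by simp
    then show ?thesis using True by linarith
  next
    case False
    assume h: "(real n - 2) / b * G j j ^ 2 \<le> G j j"
    hence "((real n - 2) / b * G j j) * G j j \<le> 1 * G j j" by (simp add: power2_eq_square mult.assoc)
    hence "(real n - 2) / b * G j j \<le> 1" using False by (metis mult_right_le_imp_le not_le)
    thus ?thesis using pos n3 bpos by (simp add: field_simps)
  qed
  have "(real n - 2) / b * G i j ^ 2 \<le> b / (real n - 2)" using q2[OF assms(1)] Gjj by linarith
  hence "G i j ^ 2 \<le> (b / (real n - 2)) ^ 2" using n3 bpos by (intro sq_aux2) auto
  moreover have "0 < b / (real n - 2)" using bpos n3 by simp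
  ultimately show ?thesis by (metis abs_le_square_iff abs_of_pos)
qed


lemma M_sym: "M i j = M j i"
  by (simp add: M_def wsym)

lemma M_off: "i \<noteq> j \<Longrightarrow> M i j = w i j"
  by (simp add: M_def)

lemma G_sym: assumes "i < n" "j < n" shows "G i j = G j i"
proof -
  have "(\<Sum>m<n. (\<Sum>l<n. G i l * M l m) * G j m) = (\<Sum>m<n. (if i = m then 1 else 0) * G j m)"
    using Ginv' assms by (intro sum.cong) auto
  also have "\<dots> = G j i" using assms by (simp add: sum_delta_mult)
  finally have 1: "(\<Sum>m<n. (\<Sum>l<n. G i l * M l m) * G j m) = G j i" .
  have "(\<Sum>m<n. (\<Sum>l<n. G i l * M l m) * G j m) = (\<Sum>m<n. \<Sum>l<n. G i l * M l m * G j m)"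
    by (simp add: sum_distrib_right)
  also have "\<dots> = (\<Sum>l<n. \<Sum>m<n. G i l * M l m * G j m)" by (rule sum.swap)
  also have "\<dots> = (\<Sum>l<n. G i l * (\<Sum>m<n. G j m * M m l))"
    unfolding sum_distrib_left by (intro sum.cong refl) (metis M_sym mult.commute mult.left_commute)
  also have "\<dots> = (\<Sum>l<n. G i l * (if j = l then 1 else 0))"
    using Ginv' assms by (intro sum.cong) auto
  also have "\<dots> = G i j" using assms by (simp add: if_distrib cong: if_cong)
  finally show ?thesis using 1 by simp
qed

definition xx :: "nat \<Rightarrow> nat \<Rightarrow> real" where
  "xx l i = (\<Sum>m\<in>{r..<n}. H i m * w m l)"

lemma xx_eq: assumes "r \<le> i" "i < n" "l < r"
  shows "(\<Sum>m\<in>{r..<n}. M i m * xx l m) = w i l"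
proof -
  have "(\<Sum>m\<in>{r..<n}. M i m * xx l m) = (\<Sum>m'\<in>{r..<n}. (\<Sum>m\<in>{r..<n}. M i m * H m m') * w m' l)"
  proof -
    have "(\<Sum>m\<in>{r..<n}. M i m * xx l m) = (\<Sum>m\<in>{r..<n}. \<Sum>m'\<in>{r..<n}. M i m * H m m' * w m' l)"
      unfolding xx_def by (simp add: sum_distrib_left mult_ac)
    also have "\<dots> = (\<Sum>m'\<in>{r..<n}. \<Sum>m\<in>{r..<n}. M i m * H m m' * w m' l)" by (rule sum.swap)
    also have "\<dots> = (\<Sum>m'\<in>{r..<n}. (\<Sum>m\<in>{r..<n}. M i m * H m m') * w m' l)"
      by (simp add: sum_distrib_right)
    finally show ?thesis .
  qed
  also have "\<dots> = (\<Sum>m'\<in>{r..<n}. (if i = m' then 1 else 0) * w m' l)"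
    using Hinv assms by (intro sum.cong) auto
  also have "\<dots> = w i l" using assms by (simp add: sum_delta_mult)
  finally show ?thesis .
qed

lemma G_decomp: assumes "r \<le> i" "i < n" "k < n"
  shows "G i k = (if r \<le> k then H i k else 0) - (\<Sum>l<r. xx l i * G l k)"
proof -
  define y where "y m = (if r \<le> m then G m k - (if r \<le> k then H m k else 0) + (\<Sum>l<r. xx l m * G l k) else 0)" for m
  have "y i' = 0" if i': "i' < n" for i'
  proof (rule inj[of y, OF _ i'])
    fix p assume p: "p < n"
    show "y p = 0 \<or> (\<Sum>m<n. M p m * y m) = 0"
    proof (cases "r \<le> p")
      case False then show ?thesis by (simp add: y_def)
    next
      case True
      have "(\<Sum>m<n. M p m * y m) = (\<Sum>m\<in>{r..<n}. M p m * (G m k - (if r \<le> k then H m k else 0) + (\<Sum>l<r. xx l m * G l k)))"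
        unfolding y_def by (simp add: if_distrib sum_restr cong: if_cong)
      also have "\<dots> = (\<Sum>m\<in>{r..<n}. M p m * G m k) - (if r \<le> k then (\<Sum>m\<in>{r..<n}. M p m * H m k) else 0)
          + (\<Sum>l<r. G l k * (\<Sum>m\<in>{r..<n}. M p m * xx l m))"
      proof -
        have e: "M p m * (G m k - (if r \<le> k then H m k else 0) + (\<Sum>l<r. xx l m * G l k))
           = M p m * G m k - (if r \<le> k then M p m * H m k else 0) + (\<Sum>l<r. G l k * (M p m * xx l m))" for m
          by (simp add: algebra_simps sum_distrib_left)
        have s: "(\<Sum>m\<in>{r..<n}. \<Sum>l<r. G l k * (M p m * xx l m)) = (\<Sum>l<r. G l k * (\<Sum>m\<in>{r..<n}. M p m * xx l m))"
          by (subst sum.swap) (simp add: sum_distrib_left)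
        show ?thesis unfolding e sum.distrib sum_subtractf s by simp
      qed
      also have "(\<Sum>l<r. G l k * (\<Sum>m\<in>{r..<n}. M p m * xx l m)) = (\<Sum>l<r. M p l * G l k)"
        using xx_eq[OF True p] M_off True by (intro sum.cong) auto
      also have "(if r \<le> k then (\<Sum>m\<in>{r..<n}. M p m * H m k) else 0) = (if r \<le> k \<and> p = k then 1 else 0)"
        using Hinv[OF True p _ assms(3)] by auto
      also have "(\<Sum>m\<in>{r..<n}. M p m * G m k) = (\<Sum>m<n. M p m * G m k) - (\<Sum>m<r. M p m * G m k)"
        using sum_split[of r n "\<lambda>m. M p m * G m k"] rn by simp
      also have "(\<Sum>m<n. M p m * G m k) = (if p = k then 1 else 0)"
        using Ginv[OF p assms(3)] .
      finally show ?thesis using True by auto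
    qed
  qed
  then have "y i = 0" using assms by simp
  then show ?thesis using assms by (simp add: y_def)
qed


lemma xx_bound: assumes ri: "r \<le> i" and "i < n" and "l < r"
  shows "\<bar>xx l i\<bar> \<le> 4 * b ^ 2 / ((real n - 1) * c ^ 2)"
proof -
  define y where "y m = (if r \<le> m then xx l m else 0)" for m
  define A where "A = (\<Sum>m\<in>{r..<n}. \<bar>xx l m\<bar>)"
  define B where "B = (\<Sum>m\<in>{r..<n}. xx l m ^ 2)"
  have n2: "0 < real n - 2" using n3 by simp
  have yM: "(\<Sum>j<n. M p j * y j) = (\<Sum>j\<in>{r..<n}. M p j * xx l j)" for p
    unfolding sum_restr[symmetric] y_def by (intro sum.cong refl) simp
  have Qy: "(\<Sum>i<n. \<Sum>j<n. M i j * y i * y j) = (\<Sum>i\<in>{r..<n}. xx l i * w i l)"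
  proof -
    have "(\<Sum>i<n. \<Sum>j<n. M i j * y i * y j) = (\<Sum>i<n. y i * (\<Sum>j<n. M i j * y j))" by (rule quad_rewrite)
    also have "\<dots> = (\<Sum>i\<in>{r..<n}. xx l i * (\<Sum>j\<in>{r..<n}. M i j * xx l j))"
      unfolding sum_restr[symmetric] yM by (intro sum.cong refl) (simp add: y_def)
    also have "\<dots> = (\<Sum>i\<in>{r..<n}. xx l i * w i l)" using xx_eq assms(3) by (intro sum.cong refl) auto
    finally show ?thesis .
  qed
  have Sy: "(\<Sum>i<n. y i ^ 2) = B" unfolding B_def sum_restr[symmetric] y_def by (intro sum.cong refl) simp
  have up: "(\<Sum>i\<in>{r..<n}. xx l i * w i l) \<le> A / c"
  proof -
    have "xx l i * w i l \<le> \<bar>xx l i\<bar> / c" if "i \<in> {r..<n}" for i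
    proof -
      have "xx l i * w i l \<le> \<bar>xx l i\<bar> * w i l" using wnn[of i l] that assms by (intro mult_right_mono) auto
      also have "\<dots> \<le> \<bar>xx l i\<bar> * (1 / c)" using wup[of i l] that assms by (intro mult_left_mono) auto
      finally show ?thesis by simp
    qed
    then have "(\<Sum>i\<in>{r..<n}. xx l i * w i l) \<le> (\<Sum>i\<in>{r..<n}. \<bar>xx l i\<bar> / c)" by (intro sum_mono) auto
    also have "\<dots> = A / c" unfolding A_def by (simp add: sum_divide_distrib)
    finally show ?thesis .
  qed
  have h1: "(real n - 2) / b * B \<le> A / c" using quad_ge[of y] up unfolding Sy Qy by linarith
  have hB: "B \<le> b / (real n - 2) * (A / c)"
    using h1 n2 bpos cpos by (simp add: field_simps)
  have A_nn: "0 \<le> A" unfolding A_def by (intro sum_nonneg) auto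
  have B_nn: "0 \<le> B" unfolding B_def by (intro sum_nonneg) auto
  have cs: "A ^ 2 \<le> real n * B"
  proof -
    have "A ^ 2 \<le> real (card {r..<n}) * (\<Sum>m\<in>{r..<n}. \<bar>xx l m\<bar> ^ 2)"
      unfolding A_def by (rule cs_sum) simp
    also have "\<dots> = real (n - r) * B" unfolding B_def by simp
    also have "\<dots> \<le> real n * B" using B_nn by (intro mult_right_mono) auto
    finally show ?thesis .
  qed
  define K where "K = real n * b / ((real n - 2) * c)"
  have "A * A \<le> K * A"
  proof -
    have "A * A \<le> real n * B" using cs by (simp add: power2_eq_square)
    also have "\<dots> \<le> real n * (b / (real n - 2) * (A / c))" using hB by (intro mult_left_mono) auto
    also have "\<dots> = K * A" unfolding K_def by (simp add: field_simps)
    finally show ?thesis .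
  qed
  then have AK: "A \<le> K"
  proof (cases "A = 0")
    case True then show ?thesis unfolding K_def using n2 bpos cpos by simp
  next
    case False then show ?thesis using \<open>A * A \<le> K * A\<close> A_nn by (metis mult_right_le_imp_le less_le)
  qed
  have "K \<le> 3 * b / c"
  proof -
    have "real n \<le> 3 * (real n - 2)" using n3 by simp
    then have "real n * (b / c) \<le> 3 * (real n - 2) * (b / c)" using bpos cpos by (intro mult_right_mono) auto
    then show ?thesis unfolding K_def using n2 bpos cpos by (simp add: field_simps)
  qed
  with AK have Ab: "A \<le> 3 * b / c" by simp
  have row: "M i i * xx l i + (\<Sum>m\<in>{r..<n}-{i}. w i m * xx l m) = w i l"
  proof -
    have "(\<Sum>m\<in>{r..<n}. M i m * xx l m) = M i i * xx l i + (\<Sum>m\<in>{r..<n}-{i}. M i m * xx l m)"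
      using assms by (simp add: sum.remove)
    also have "(\<Sum>m\<in>{r..<n}-{i}. M i m * xx l m) = (\<Sum>m\<in>{r..<n}-{i}. w i m * xx l m)"
      by (intro sum.cong refl) (simp add: M_off)
    finally show ?thesis using xx_eq[OF assms] by simp
  qed
  have Mii: "(real n - 1) / b \<le> M i i" using Mii_ge assms by simp
  have "0 < (real n - 1) / b" using n3 bpos by simp
  then have Mnn: "0 \<le> M i i" using Mii by linarith
  have "M i i * \<bar>xx l i\<bar> \<le> 1 / c + A / c"
  proof -
    have "M i i * \<bar>xx l i\<bar> = \<bar>w i l - (\<Sum>m\<in>{r..<n}-{i}. w i m * xx l m)\<bar>"
    proof -
      have "w i l - (\<Sum>m\<in>{r..<n}-{i}. w i m * xx l m) = M i i * xx l i" using row by linarith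
      then show ?thesis using Mnn by (simp add: abs_mult)
    qed
    also have "\<dots> \<le> \<bar>w i l\<bar> + \<bar>\<Sum>m\<in>{r..<n}-{i}. w i m * xx l m\<bar>" by (rule abs_triangle_ineq4)
    also have "\<bar>w i l\<bar> \<le> 1 / c" using wnn[of i l] wup[of i l] assms by simp
    also have "\<bar>\<Sum>m\<in>{r..<n}-{i}. w i m * xx l m\<bar> \<le> (\<Sum>m\<in>{r..<n}-{i}. \<bar>w i m * xx l m\<bar>)" by (rule sum_abs)
    also have "\<dots> \<le> (\<Sum>m\<in>{r..<n}-{i}. \<bar>xx l m\<bar> / c)"
    proof (intro sum_mono)
      fix m assume m: "m \<in> {r..<n}-{i}"
      have "\<bar>w i m * xx l m\<bar> = w i m * \<bar>xx l m\<bar>" using wnn[of i m] m assms by (simp add: abs_mult)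
      also have "\<dots> \<le> 1 / c * \<bar>xx l m\<bar>" using wup[of i m] m assms by (intro mult_right_mono) auto
      finally show "\<bar>w i m * xx l m\<bar> \<le> \<bar>xx l m\<bar> / c" by simp
    qed
    also have "\<dots> \<le> (\<Sum>m\<in>{r..<n}. \<bar>xx l m\<bar> / c)" using cpos by (intro sum_mono2) auto
    also have "\<dots> = A / c" unfolding A_def by (simp add: sum_divide_distrib)
    finally show ?thesis by simp
  qed
  also have "1 / c + A / c \<le> 4 * b / c ^ 2"
  proof -
    have "1 + A \<le> 4 * (b / c)" using Ab cb cpos by (simp add: field_simps)
    then have "(1 + A) / c \<le> 4 * (b / c) / c" by (rule divide_right_mono) (simp add: less_imp_le[OF cpos])
    moreover have "4 * (b / c) / c = 4 * b / c ^ 2" by (simp add: power2_eq_square)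
    moreover have "1 / c + A / c = (1 + A) / c" by (simp add: add_divide_distrib)
    ultimately show ?thesis by linarith
  qed
  finally have "M i i * \<bar>xx l i\<bar> \<le> 4 * b / c ^ 2" .
  moreover have "(real n - 1) / b * \<bar>xx l i\<bar> \<le> M i i * \<bar>xx l i\<bar>" using Mii by (intro mult_right_mono) auto
  ultimately have "(real n - 1) / b * \<bar>xx l i\<bar> \<le> 4 * b / c ^ 2" by linarith
  moreover have "0 < (real n - 1) / b" using n3 bpos by simp
  ultimately have "\<bar>xx l i\<bar> \<le> (4 * b / c ^ 2) / ((real n - 1) / b)"
    by (rule div_aux)
  also have "(4 * b / c ^ 2) / ((real n - 1) / b) = 4 * b ^ 2 / ((real n - 1) * c ^ 2)"
    by (simp add: power2_eq_square mult_ac)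
  finally show ?thesis .
qed


lemma main_bound: assumes "r \<le> i" "i < n" "r \<le> j" "j < n"
  shows "\<bar>G i j - H i j\<bar> \<le> 192 * real r ^ 2 * b ^ 6 / (real n ^ 3 * c ^ 5)"
proof -
  define X where "X = 4 * b ^ 2 / ((real n - 1) * c ^ 2)"
  define g where "g = b / (real n - 2)"
  have Xnn: "0 \<le> X" unfolding X_def using n3 by simp
  have gnn: "0 \<le> g" unfolding g_def using n3 bpos by simp
  have xb: "\<bar>xx l p\<bar> \<le> X" if "r \<le> p" "p < n" "l < r" for l p
    unfolding X_def using xx_bound that .
  have Gb: "\<bar>G p q\<bar> \<le> g" if "p < n" "q < n" for p q
    unfolding g_def using G_bound that .
  have e1: "G i j - H i j = - (\<Sum>l<r. xx l i * G l j)"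
    using G_decomp[OF assms(1,2,4)] assms(3) by simp
  have Glj: "\<bar>G l j\<bar> \<le> real r * (X * g)" if l: "l < r" for l
  proof -
    have "G l j = G j l" using G_sym l rn assms by simp
    also have "\<dots> = - (\<Sum>m<r. xx m j * G m l)"
      using G_decomp[OF assms(3,4), of l] l rn by simp
    finally have "\<bar>G l j\<bar> = \<bar>\<Sum>m<r. xx m j * G m l\<bar>" by simp
    also have "\<dots> \<le> (\<Sum>m<r. \<bar>xx m j\<bar> * \<bar>G m l\<bar>)" by (rule order_trans[OF sum_abs]) (simp add: abs_mult)
    also have "\<dots> \<le> (\<Sum>m<r. X * g)"
      using xb[OF assms(3,4)] Gb l rn Xnn by (intro sum_mono mult_mono) auto
    finally show ?thesis by simp
  qed
  have "\<bar>G i j - H i j\<bar> = \<bar>\<Sum>l<r. xx l i * G l j\<bar>" using e1 by simp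
  also have "\<dots> \<le> (\<Sum>l<r. \<bar>xx l i\<bar> * \<bar>G l j\<bar>)" by (rule order_trans[OF sum_abs]) (simp add: abs_mult)
  also have "\<dots> \<le> (\<Sum>l<r. X * (real r * (X * g)))"
    using xb[OF assms(1,2)] Glj Xnn by (intro sum_mono mult_mono) auto
  also have "\<dots> = real r * (X * (real r * X * g))" by (simp add: mult_ac)
  also have "\<dots> \<le> 192 * real r ^ 2 * b ^ 6 / (real n ^ 3 * c ^ 5)"
    unfolding X_def g_def using num_aux[of "real n" c b "real r"] n3 cpos cb by (simp add: mult_ac)
  finally show ?thesis .
qed

end


lemma mult_entry:
  assumes "A \<in> carrier_mat n k" "B \<in> carrier_mat k m" "i < n" "j < m"
  shows "(A * B) $$ (i,j) = (\<Sum>l<k. A $$ (i,l) * B $$ (l,j))"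
  using assms by (simp add: scalar_prod_def atLeast0LessThan)

lemma mult_vec_entry:
  assumes "A \<in> carrier_mat n k" "v \<in> carrier_vec k" "i < n"
  shows "(A *\<^sub>v v) $ i = (\<Sum>l<k. A $$ (i,l) * v $ l)"
  using assms by (simp add: scalar_prod_def atLeast0LessThan)

lemma inv_exists:
  fixes A :: "real mat"
  assumes A: "A \<in> carrier_mat n n"
    and ker: "\<And>v. v \<in> carrier_vec n \<Longrightarrow> A *\<^sub>v v = 0\<^sub>v n \<Longrightarrow> v = 0\<^sub>v n"
  shows "\<exists>B. mat_inverse A = Some B \<and> A * B = 1\<^sub>m n \<and> B * A = 1\<^sub>m n \<and> B \<in> carrier_mat n n"
proof -
  have "det A \<noteq> 0" using det_0_iff_vec_prod_zero[OF A] ker by blast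
  then have U: "A \<in> Units (ring_mat TYPE(real) n ())" by (rule det_non_zero_imp_unit[OF A])
  show ?thesis
  proof (cases "mat_inverse A")
    case None then show ?thesis using mat_inverse(1)[OF A, of "()"] U by simp
  next
    case (Some B) then show ?thesis using mat_inverse(2)[OF A Some] by blast
  qed
qed

lemma sum_shift: fixes f :: "nat \<Rightarrow> real" assumes "r \<le> n"
  shows "(\<Sum>k\<in>{r..<n}. f k) = (\<Sum>k<n - r. f (k + r))"
  by (rule sum.reindex_bij_witness[of _ "\<lambda>k. k + r" "\<lambda>k. k - r"]) (use assms in auto)

lemma key_bound:
  fixes n r :: nat and \<beta> :: "nat \<Rightarrow> real"
  assumes n3: "3 \<le> n" and rn: "r < n"
  shows "max_norm (bm_W22 r n \<beta> - bm_W22_tilde r n \<beta>)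
           \<le> 192 * real r ^ 2 * bm_b n \<beta> ^ 6 / (real n ^ 3 * bm_c n \<beta> ^ 5)"
proof -
  define w where "w i j = (if i = j then 0 else bm_v \<beta> i j)" for i j
  define b where "b = bm_b n \<beta>"
  define c where "c = bm_c n \<beta>"
  define T where "T = {(1 + exp (\<beta> i + \<beta> j))^2 / exp (\<beta> i + \<beta> j) | i j. i < n \<and> j < n \<and> i \<noteq> j}"
  have bT: "b = Max T" unfolding b_def T_def bm_b_def ..
  have cT: "c = Min T" unfolding c_def T_def bm_c_def ..
  have Tfin: "finite T"
  proof (rule finite_subset)
    show "T \<subseteq> (\<lambda>(i,j). (1 + exp (\<beta> i + \<beta> j))^2 / exp (\<beta> i + \<beta> j)) ` ({..<n} \<times> {..<n})"
      unfolding T_def by auto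
  qed auto
  have vT: "1 / bm_v \<beta> i j \<in> T" if "i < n" "j < n" "i \<noteq> j" for i j
    unfolding T_def bm_v_def using that by auto
  have Tne: "T \<noteq> {}" using vT[of 0 1] n3 by auto
  have ep: "0 < 1 + exp x" for x :: real by (simp add: add_pos_pos)
  have Tpos: "0 < t" if "t \<in> T" for t
    using that ep unfolding T_def by (auto intro!: divide_pos_pos) (metis ep less_irrefl)
  have vpos: "0 < bm_v \<beta> i j" for i j
  proof -
    have "0 < (1 + exp (\<beta> i + \<beta> j)) ^ 2" using ep[of "\<beta> i + \<beta> j"] by simp
    then show ?thesis unfolding bm_v_def by (intro divide_pos_pos) auto
  qed
  have cpos: "0 < c" unfolding cT using Min_in[OF Tfin Tne] Tpos by blast
  have cb: "c \<le> b" unfolding cT bT using Min_in[OF Tfin Tne] Max_ge[OF Tfin] by (meson Min_le Tfin order_trans)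
  have wlow: "1 / b \<le> w i j" if "i < n" "j < n" "i \<noteq> j" for i j
  proof -
    have t: "1 / bm_v \<beta> i j \<le> b" unfolding bT using Max_ge[OF Tfin vT[OF that]] .
    have "1 / b \<le> 1 / (1 / bm_v \<beta> i j)"
      using t vpos[of i j] cpos cb by (intro divide_left_mono) (auto intro!: mult_pos_pos divide_pos_pos)
    then show ?thesis using that by (simp add: w_def)
  qed
  have wup: "w i j \<le> 1 / c" if "i < n" "j < n" for i j
  proof (cases "i = j")
    case True then show ?thesis using cpos by (simp add: w_def)
  next
    case False
    have t: "c \<le> 1 / bm_v \<beta> i j" unfolding cT using Min_le[OF Tfin vT[OF that False]] .
    have "1 / (1 / bm_v \<beta> i j) \<le> 1 / c"
      using t cpos vpos[of i j] by (intro divide_left_mono) (auto intro!: mult_pos_pos divide_pos_pos)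
    then show ?thesis using False by (simp add: w_def)
  qed
  have wsym: "w i j = w j i" for i j by (simp add: w_def bm_v_def add.commute)
  interpret C: core n r w b c "\<lambda>_ _. 0" "\<lambda>_ _. 0"
    using n3 rn wsym wlow wup cpos cb by unfold_locales (auto simp: w_def)
  define V where "V = bm_V n \<beta>"
  have Vc: "V \<in> carrier_mat n n" by (simp add: V_def bm_V_def)
  have Vent: "V $$ (i,j) = C.M i j" if "i < n" "j < n" for i j
  proof (cases "i = j")
    case True
    have "(\<Sum>k<n. w i k) = w i i + (\<Sum>k\<in>{..<n}-{i}. w i k)" using that by (simp add: sum.remove)
    also have "\<dots> = (\<Sum>k\<in>{0..<n}-{i}. bm_v \<beta> i k)"
      by (simp add: w_def atLeast0LessThan)
    finally show ?thesis using that True by (simp add: V_def bm_V_def C.M_def)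
  next
    case False then show ?thesis using that by (simp add: V_def bm_V_def C.M_def w_def)
  qed
  have kerV: "v = 0\<^sub>v n" if v: "v \<in> carrier_vec n" and Vv: "V *\<^sub>v v = 0\<^sub>v n" for v
  proof -
    have "v $ i = 0" if i: "i < n" for i
    proof (rule C.inj[of "\<lambda>k. v $ k", OF _ i])
      fix p assume p: "p < n"
      have "(\<Sum>k<n. C.M p k * v $ k) = (V *\<^sub>v v) $ p"
        using mult_vec_entry[OF Vc v p] Vent p by simp
      also have "\<dots> = 0" using Vv p by simp
      finally show "v $ p = 0 \<or> (\<Sum>k<n. C.M p k * v $ k) = 0" by simp
    qed
    then show ?thesis using v by (intro eq_vecI) auto
  qed
  obtain G0 where G0: "mat_inverse V = Some G0" "V * G0 = 1\<^sub>m n" "G0 * V = 1\<^sub>m n" "G0 \<in> carrier_mat n n"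
    using inv_exists[OF Vc kerV] by blast
  have minvV: "minv V = G0" by (simp add: minv_def G0)
  define D where "D = br_block r V"
  have Dc: "D \<in> carrier_mat (n - r) (n - r)" using Vc by (simp add: D_def br_block_def)
  have Dent: "D $$ (i,j) = C.M (i + r) (j + r)" if "i < n - r" "j < n - r" for i j
    using that Vc Vent[of "i + r" "j + r"] by (simp add: D_def br_block_def)
  have kerD: "v = 0\<^sub>v (n - r)" if v: "v \<in> carrier_vec (n - r)" and Dv: "D *\<^sub>v v = 0\<^sub>v (n - r)" for v
  proof -
    define y where "y k = (if r \<le> k then v $ (k - r) else 0)" for k
    have y0: "y k = 0" if k: "k < n" for k
    proof (rule C.inj[of y, OF _ k])
      fix p assume p: "p < n"
      show "y p = 0 \<or> (\<Sum>k<n. C.M p k * y k) = 0"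
      proof (cases "r \<le> p")
        case False then show ?thesis by (simp add: y_def)
      next
        case True
        have "(\<Sum>k<n. C.M p k * y k) = (\<Sum>k<n. (if r \<le> k then C.M p k * v $ (k - r) else 0))"
          by (intro sum.cong refl) (simp add: y_def)
        also have "\<dots> = (\<Sum>k\<in>{r..<n}. C.M p k * v $ (k - r))" by (rule sum_restr)
        also have "\<dots> = (\<Sum>k<n - r. C.M p (k + r) * v $ k)" using rn by (simp add: sum_shift)
        also have "\<dots> = (\<Sum>k<n - r. D $$ (p - r, k) * v $ k)"
          using True p Dent by (intro sum.cong refl) auto
        also have "\<dots> = (D *\<^sub>v v) $ (p - r)" using mult_vec_entry[OF Dc v, of "p - r"] True p by simp
        also have "\<dots> = 0" using Dv True p by simp
        finally show ?thesis by simp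
      qed
    qed
    have "v $ i = 0" if "i < n - r" for i using y0[of "i + r"] that by (simp add: y_def)
    then show ?thesis using v by (intro eq_vecI) auto
  qed
  obtain Hm where Hm: "mat_inverse D = Some Hm" "D * Hm = 1\<^sub>m (n - r)" "Hm * D = 1\<^sub>m (n - r)" "Hm \<in> carrier_mat (n - r) (n - r)"
    using inv_exists[OF Dc kerD] by blast
  have minvD: "minv D = Hm" by (simp add: minv_def Hm)
  define G where "G i j = G0 $$ (i,j)" for i j
  define H where "H i j = Hm $$ (i - r, j - r)" for i j
  have Ginv: "(\<Sum>l<n. C.M i l * G l j) = (if i = j then 1 else 0)" if "i < n" "j < n" for i j
  proof -
    have "(\<Sum>l<n. C.M i l * G l j) = (V * G0) $$ (i,j)"
      using mult_entry[OF Vc G0(4) that] Vent that by (simp add: G_def)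
    then show ?thesis using G0(2) that by simp
  qed
  have Ginv': "(\<Sum>l<n. G i l * C.M l j) = (if i = j then 1 else 0)" if "i < n" "j < n" for i j
  proof -
    have "(\<Sum>l<n. G i l * C.M l j) = (G0 * V) $$ (i,j)"
      using mult_entry[OF G0(4) Vc that] Vent that by (simp add: G_def)
    then show ?thesis using G0(3) that by simp
  qed
  have Hinv: "(\<Sum>l\<in>{r..<n}. C.M i l * H l j) = (if i = j then 1 else 0)"
    if "r \<le> i" "i < n" "r \<le> j" "j < n" for i j
  proof -
    have "(\<Sum>l\<in>{r..<n}. C.M i l * H l j) = (\<Sum>l<n - r. C.M i (l + r) * H (l + r) j)"
      using rn by (simp add: sum_shift)
    also have "\<dots> = (\<Sum>l<n - r. D $$ (i - r, l) * Hm $$ (l, j - r))"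
      using that Dent by (intro sum.cong refl) (auto simp: H_def)
    also have "\<dots> = (D * Hm) $$ (i - r, j - r)"
      using mult_entry[OF Dc Hm(4), of "i - r" "j - r"] that by simp
    also have "\<dots> = (if i = j then 1 else 0)" using Hm(2) that by auto
    finally show ?thesis .
  qed
  interpret C2: core2 n r w b c G H
    by (intro core2.intro C.core_axioms core2_axioms.intro Ginv Ginv' Hinv)
  define S where "S = bm_S n \<beta>"
  have Sc: "S \<in> carrier_mat n n" by (simp add: S_def bm_S_def)
  define Z where "Z = bm_W22 r n \<beta> - bm_W22_tilde r n \<beta>"
  have W1: "bm_W22 r n \<beta> = br_block r (G0 - S)" unfolding bm_W22_def minvV[unfolded V_def] S_def ..
  have W2: "bm_W22_tilde r n \<beta> = Hm - br_block r S" unfolding bm_W22_tilde_def minvD[unfolded D_def V_def] S_def ..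
  have dimZ: "dim_row Z = n - r" "dim_col Z = n - r"
    unfolding Z_def W2 using Sc by (auto simp: br_block_def)
  have entZ: "Z $$ (i,j) = G (i + r) (j + r) - H (i + r) (j + r)" if "i < n - r" "j < n - r" for i j
  proof -
    have "Z $$ (i,j) = br_block r (G0 - S) $$ (i,j) - (Hm - br_block r S) $$ (i,j)"
      unfolding Z_def W1 W2 using that Sc by (simp add: br_block_def)
    also have "\<dots> = G0 $$ (i + r, j + r) - Hm $$ (i, j)"
      using that Sc G0(4) Hm(4) by (simp add: br_block_def)
    finally show ?thesis by (simp add: G_def H_def)
  qed
  have "max_norm Z \<le> 192 * real r ^ 2 * b ^ 6 / (real n ^ 3 * c ^ 5)"
    unfolding max_norm_def
  proof (rule Max.boundedI)
    show "finite {\<bar>Z $$ (i, j)\<bar> |i j. i < dim_row Z \<and> j < dim_col Z}"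
      by (rule finite_image_set2) auto
    show "{\<bar>Z $$ (i, j)\<bar> |i j. i < dim_row Z \<and> j < dim_col Z} \<noteq> {}"
    proof -
      have "\<bar>Z $$ (0, 0)\<bar> \<in> {\<bar>Z $$ (i, j)\<bar> |i j. i < dim_row Z \<and> j < dim_col Z}"
        using dimZ rn by (intro CollectI exI[of _ 0] conjI refl) auto
      then show ?thesis by blast
    qed
  next
    fix a assume "a \<in> {\<bar>Z $$ (i, j)\<bar> |i j. i < dim_row Z \<and> j < dim_col Z}"
    then obtain i j where a: "a = \<bar>Z $$ (i, j)\<bar>" and ij: "i < n - r" "j < n - r" using dimZ by auto
    show "a \<le> 192 * real r ^ 2 * b ^ 6 / (real n ^ 3 * c ^ 5)"
      unfolding a entZ[OF ij] using C2.main_bound[of "i + r" "j + r"] ij by simp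
  qed
  then show ?thesis unfolding Z_def b_def c_def .
qed

theorem lemma10:
  fixes r :: nat
  assumes "r > 0"
  shows "\<exists>C N. \<forall>n \<ge> N. \<forall>\<beta> :: nat \<Rightarrow> real. n > r \<longrightarrow>
           max_norm (bm_W22 r n \<beta> - bm_W22_tilde r n \<beta>)
             \<le> C * bm_b n \<beta> ^ 6 / (real n ^ 3 * bm_c n \<beta> ^ 5)"
  by (intro exI[of _ "192 * real r ^ 2"] exI[of _ 3] allI impI key_bound)

end
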